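(* For every positive integer $m$, \[ {}_{H}w_{m}(x)=(1+x-m)\,w_{m-1}(x)+(1+x)\sum_{k=1}^{m-1}\binom{m}{k}w_{k-1}(x)\,w_{m-k}(x). \]
   Context: $\genfrac{\{}{\}}{0pt}{}{n}{k}$ denotes the Stirling numbers of the second kind. The geometric polynomials are $w_n(x)=\sum_{k=0}^{n}\genfrac{\{}{\}}{0pt}{}{n}{k}k!\,x^k$ (so $w_0(x)=1$). With $H_k=\sum_{i=1}^k 1/i$, the harmonic geometric polynomials are ${}_{H}w_n(x)=\sum_{k=1}^{n}\genfrac{\{}{\}}{0pt}{}{n}{k}k!\,H_k\,x^k$. *)

theory Defs
  imports "HOL-Analysis.Analysis" "HOL-Combinatorics.Stirling"
begin

definition geom_poly :: "nat \<Rightarrow> real \<Rightarrow> real" where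
  "geom_poly n x = (\<Sum>k=0..n. real (Stirling n k) * fact k * x ^ k)"

definition harm_geom_poly :: "nat \<Rightarrow> real \<Rightarrow> real" where
  "harm_geom_poly n x = (\<Sum>k=1..n. real (Stirling n k) * fact k * harm k * x ^ k)"

end

theory Submission imports Defs "HOL-Computational_Algebra.Formal_Power_Series" begin
unbundle no vec_syntax
notation fps_nth (infixl \<open>$\<close> 75)

definition DD :: "real fps" where "DD = fps_exp 1 - 1"

lemma DD0[simp]: "DD $ 0 = 0" by (simp add: DD_def)

lemma DD_pow_nth: "(DD ^ k) $ n = fact k * real (Stirling n k) / fact n"
proof (induction n arbitrary: k)
  case 0
  then show ?case by (cases k) (simp_all add: fps_nth_power_0)
next
  case (Suc n)
  have d: "fps_deriv DD = DD + 1" by (simp add: DD_def)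
  have e: "(DD ^ k) $ Suc n = fps_deriv (DD ^ k) $ n / (real n + 1)"
    by (simp add: field_simps)
  show ?case
  proof (cases k)
    case 0
    then show ?thesis by simp
  next
    case (Suc j)
    have "fps_deriv (DD ^ Suc j) = of_nat (Suc j) * (DD + 1) * DD ^ j"
      using fps_deriv_power'[of DD "Suc j"] d by simp
    also have "\<dots> = fps_const (real (Suc j)) * (DD ^ Suc j + DD ^ j)"
      by (simp only: fps_of_nat[symmetric] of_nat_id power_Suc distrib_left distrib_right mult_1_left mult.assoc)
    finally have "fps_deriv (DD ^ k) = fps_const (real (Suc j)) * (DD ^ Suc j + DD ^ j)"
      using Suc by simp
    then have "fps_deriv (DD ^ k) $ n = real (Suc j) * ((DD ^ Suc j) $ n + (DD ^ j) $ n)"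
      by (simp del: power_Suc)
    also have "\<dots> = real (Suc j) * (fact (Suc j) * real (Stirling n (Suc j)) / fact n + fact j * real (Stirling n j) / fact n)"
      using Suc.IH[of "Suc j"] Suc.IH[of j] by (simp del: power_Suc)
    also have "\<dots> = fact (Suc j) * real (Stirling (Suc n) (Suc j)) / fact n"
      by (simp add: field_simps)
    finally have F: "fps_deriv (DD ^ k) $ n = fact k * real (Stirling (Suc n) k) / fact n"
      using Suc by simp
    have "(DD ^ k) $ Suc n = fact k * real (Stirling (Suc n) k) / fact n / (real n + 1)"
      using e F by simp
    then show ?thesis by (simp add: field_simps)
  qed
qed

lemma harm0: "harm 0 = 0" by (simp add: harm_def)

context fixes x :: real begin

definition uu where "uu = fps_const x * DD"
definition WW where "WW = Abs_fps (\<lambda>n. 1::real) oo uu"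
definition HH where "HH = Abs_fps (\<lambda>n. harm n :: real) oo uu"
definition LL where "LL = Abs_fps (\<lambda>n. if n = 0 then 0 else 1 / real n) oo uu"
definition GG where "GG = Abs_fps (\<lambda>n. if n = 0 then 0 else
   ((1 + x) * (WW $ (n - 1)) - (if n = 1 then 1 else 0)) / real n)"

lemma uu0[simp]: "uu $ 0 = 0" by (simp add: uu_def)

lemma uu_pow_nth: "(uu ^ i) $ n = x ^ i * (fact i * real (Stirling n i) / fact n)"
  by (simp add: uu_def power_mult_distrib fps_const_power DD_pow_nth)

lemma WW_nth: "WW $ n = geom_poly n x / fact n"
proof -
  have "WW $ n = (\<Sum>i=0..n. 1 * (x ^ i * (fact i * real (Stirling n i) / fact n)))"
    by (simp add: WW_def fps_compose_nth uu_pow_nth)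
  also have "\<dots> = (\<Sum>i=0..n. real (Stirling n i) * fact i * x ^ i) / fact n"
    unfolding sum_divide_distrib by (rule sum.cong) auto
  finally show ?thesis by (simp add: geom_poly_def)
qed

lemma HH_nth: "HH $ n = harm_geom_poly n x / fact n"
proof -
  have "HH $ n = (\<Sum>i=0..n. harm i * (x ^ i * (fact i * real (Stirling n i) / fact n)))"
    by (simp add: HH_def fps_compose_nth uu_pow_nth)
  also have "\<dots> = (\<Sum>i=1..n. harm i * (x ^ i * (fact i * real (Stirling n i) / fact n)))"
    by (simp add: sum.atLeast_Suc_atMost harm0)
  also have "\<dots> = harm_geom_poly n x / fact n"
    by (simp add: harm_geom_poly_def sum_divide_distrib mult_ac)
  finally show ?thesis .
qed

lemma A_id: "Abs_fps (\<lambda>n. 1::real) * (1 - fps_X) = 1"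
  by (auto simp: fps_eq_iff algebra_simps)

lemma hA_id: "Abs_fps (\<lambda>n. harm n :: real) * (1 - fps_X) = Abs_fps (\<lambda>n. if n = 0 then 0 else 1 / real n)"
proof (rule fps_ext)
  fix n
  show "(Abs_fps (\<lambda>n. harm n :: real) * (1 - fps_X)) $ n = Abs_fps (\<lambda>n. if n = 0 then 0 else 1 / real n) $ n"
  proof (cases n)
    case 0
    then show ?thesis by (simp add: harm0 algebra_simps)
  next
    case (Suc k)
    have "(Abs_fps (\<lambda>n. harm n :: real) * (1 - fps_X)) $ n = harm (Suc k) - harm k"
      using Suc by (simp add: algebra_simps)
    then show ?thesis using Suc by (simp add: harm_Suc inverse_eq_divide)
  qed
qed

lemma lA_deriv: "fps_deriv (Abs_fps (\<lambda>n. if n = 0 then 0 else 1 / real n)) = Abs_fps (\<lambda>n. 1::real)"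
  by (auto simp: fps_eq_iff field_simps)

lemma comp1X: "(1 - fps_X) oo uu = 1 - uu"
  by (simp add: fps_compose_sub_distrib)

lemma WW_id: "WW * (1 - uu) = 1"
proof -
  have "(Abs_fps (\<lambda>n. 1::real) * (1 - fps_X)) oo uu = 1" by (simp add: A_id)
  then show ?thesis by (simp add: fps_compose_mult_distrib WW_def comp1X)
qed

lemma HH_id: "HH * (1 - uu) = LL"
proof -
  have "(Abs_fps (\<lambda>n. harm n :: real) * (1 - fps_X)) oo uu = LL" by (simp add: hA_id LL_def)
  then show ?thesis by (simp add: fps_compose_mult_distrib HH_def comp1X)
qed

lemma LL_deriv: "fps_deriv LL = WW * (fps_const x * (DD + 1))"
proof -
  have "fps_deriv DD = DD + 1" by (simp add: DD_def)
  then show ?thesis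
    by (simp add: LL_def fps_compose_deriv lA_deriv WW_def uu_def)
qed

lemma GG_deriv: "fps_deriv GG = fps_const (1 + x) * WW - 1"
  by (auto simp: fps_eq_iff GG_def field_simps)

lemma LL_GG: "LL = GG"
proof -
  have "fps_deriv LL = fps_deriv GG"
  proof -
    have "WW - WW * uu = 1" using WW_id by (simp add: algebra_simps)
    then show ?thesis unfolding LL_deriv GG_deriv uu_def
      by (simp add: algebra_simps fps_const_add[symmetric])
  qed
  moreover have "LL $ 0 = 0" by (simp add: LL_def)
  moreover have "GG $ 0 = 0" by (simp add: GG_def)
  ultimately show ?thesis by (simp add: fps_deriv_eq_iff)
qed

lemma HH_GW: "HH = GG * WW"
proof -
  have "HH = HH * (WW * (1 - uu))" using WW_id by simp
  also have "\<dots> = (HH * (1 - uu)) * WW" by (simp add: algebra_simps)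
  finally show ?thesis using HH_id LL_GG by simp
qed

end


lemma geom0: "geom_poly 0 x = 1" by (simp add: geom_poly_def)

lemma GG_nth: "1 \<le> i \<Longrightarrow> GG x $ i = (1 + x) * geom_poly (i - 1) x / fact i - (if i = 1 then 1 else 0)"
  by (cases i) (auto simp: GG_def WW_nth field_simps)

lemma term_eq:
  assumes "1 \<le> i" "i \<le> m"
  shows "fact m * (GG x $ i * WW x $ (m - i)) =
    (1 + x) * real (m choose i) * geom_poly (i - 1) x * geom_poly (m - i) x
    - (if i = 1 then real m * geom_poly (m - 1) x else 0)"
proof -
  have b: "real (m choose i) = fact m / (fact i * fact (m - i))"
    using assms by (simp add: binomial_fact)
  have f: "fact m = real m * fact (m - 1)"
    using assms by (metis fact_reduce le_trans not_one_le_zero of_nat_0_eq_iff neq0_conv)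
  show ?thesis
  proof (cases "i = 1")
    case True
    then show ?thesis using assms by (simp add: GG_nth WW_nth b field_simps f)
  next
    case False
    then show ?thesis using assms by (simp add: GG_nth WW_nth b field_simps)
  qed
qed

theorem theorem2:
  fixes m :: nat and x :: real
  assumes "m \<ge> 1"
  shows "harm_geom_poly m x =
    (1 + x - real m) * geom_poly (m - 1) x
    + (1 + x) * (\<Sum>k=1..m-1. real (m choose k) * geom_poly (k - 1) x * geom_poly (m - k) x)"
proof -
  obtain k where mk: "m = Suc k" using assms by (cases m) auto
  have "harm_geom_poly m x = fact m * HH x $ m" by (simp add: HH_nth)
  also have "\<dots> = (\<Sum>i=0..m. fact m * (GG x $ i * WW x $ (m - i)))"
    by (simp add: HH_GW fps_mult_nth sum_distrib_left)
  also have "\<dots> = (\<Sum>i=1..m. fact m * (GG x $ i * WW x $ (m - i)))"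
    by (simp add: sum.atLeast_Suc_atMost GG_def)
  also have "\<dots> = (\<Sum>i=1..m. (1 + x) * real (m choose i) * geom_poly (i - 1) x * geom_poly (m - i) x
    - (if i = 1 then real m * geom_poly (m - 1) x else 0))"
    by (rule sum.cong) (auto simp: term_eq)
  also have "\<dots> = (\<Sum>i=1..m. (1 + x) * real (m choose i) * geom_poly (i - 1) x * geom_poly (m - i) x)
    - real m * geom_poly (m - 1) x"
    using assms by (simp add: sum_subtractf)
  also have "(\<Sum>i=1..m. (1 + x) * real (m choose i) * geom_poly (i - 1) x * geom_poly (m - i) x)
     = (1 + x) * (\<Sum>i=1..m-1. real (m choose i) * geom_poly (i - 1) x * geom_poly (m - i) x)
       + (1 + x) * geom_poly (m - 1) x"
    unfolding mk by (simp add: sum_distrib_left geom0 mult_ac)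
  finally show ?thesis by (simp add: algebra_simps)
qed

end
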